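(* Let $(S,\wedge,\vee)$ be a skew lattice. Then the map $r:S\times S\to S\times S$, $r(x,y)=(x\lfloor y\rfloor,\; y)$, is an idempotent set-theoretic solution of the Yang–Baxter equation.
   Context: A skew lattice is a set $S$ with two binary operations $\wedge,\vee$, each idempotent and associative, satisfying the absorption laws $x\wedge(x\vee y)=x=x\vee(x\wedge y)$ and $(x\wedge y)\vee y=y=(x\vee y)\wedge y$ for all $x,y\in S$. For $x,y$ in a skew lattice, the lower update of $x$ by $y$ is $x\lfloor y\rfloor=(y\wedge x\wedge y)\vee x\vee(y\wedge x\wedge y)$. A set-theoretic solution of the Yang–Baxter equation is a pair $(X,r)$ with $X$ a nonempty set and $r:X\times X\to X\times X$ satisfying $(r\times\mathrm{id})\circ(\mathrm{id}\times r)\circ(r\times\mathrm{id})=(\mathrm{id}\times r)\circ(r\times\mathrm{id})\circ(\mathrm{id}\times r)$; it is idempotent if $r^2=r$. *)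

theory Defs
  imports Main
begin

definition skew_lattice :: "('a \<Rightarrow> 'a \<Rightarrow> 'a) \<Rightarrow> ('a \<Rightarrow> 'a \<Rightarrow> 'a) \<Rightarrow> bool" where
  "skew_lattice mt jn \<longleftrightarrow>
     (\<forall>x. mt x x = x) \<and> (\<forall>x. jn x x = x) \<and>
     (\<forall>x y z. mt (mt x y) z = mt x (mt y z)) \<and>
     (\<forall>x y z. jn (jn x y) z = jn x (jn y z)) \<and>
     (\<forall>x y. mt x (jn x y) = x \<and> jn x (mt x y) = x) \<and>
     (\<forall>x y. jn (mt x y) y = y \<and> mt (jn x y) y = y)"

definition lower_update :: "('a \<Rightarrow> 'a \<Rightarrow> 'a) \<Rightarrow> ('a \<Rightarrow> 'a \<Rightarrow> 'a) \<Rightarrow> 'a \<Rightarrow> 'a \<Rightarrow> 'a" where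
  "lower_update mt jn x y = jn (jn (mt (mt y x) y) x) (mt (mt y x) y)"

definition is_YBE_solution :: "('a \<times> 'a \<Rightarrow> 'a \<times> 'a) \<Rightarrow> bool" where
  "is_YBE_solution r \<longleftrightarrow>
     (\<forall>x y z.
        (let r12 = (\<lambda>(a, b, c). (fst (r (a, b)), snd (r (a, b)), c));
             r23 = (\<lambda>(a, b, c). (a, fst (r (b, c)), snd (r (b, c))))
         in (r12 \<circ> r23 \<circ> r12) (x, y, z) = (r23 \<circ> r12 \<circ> r23) (x, y, z)))"

definition idempotent_solution :: "('a \<times> 'a \<Rightarrow> 'a \<times> 'a) \<Rightarrow> bool" where
  "idempotent_solution r \<longleftrightarrow> is_YBE_solution r \<and> r \<circ> r = r"

end

theory Submission
  imports Defs
begin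

locale sk =
  fixes mt :: "'a \<Rightarrow> 'a \<Rightarrow> 'a" (infixl "\<sqinter>" 70) and jn :: "'a \<Rightarrow> 'a \<Rightarrow> 'a" (infixl "\<squnion>" 65)
  assumes mi: "x \<sqinter> x = x" and ji: "x \<squnion> x = x"
  and ma: "(x \<sqinter> y) \<sqinter> z = x \<sqinter> (y \<sqinter> z)"
  and ja: "(x \<squnion> y) \<squnion> z = x \<squnion> (y \<squnion> z)"
  and a1: "x \<sqinter> (x \<squnion> y) = x" and a2: "x \<squnion> (x \<sqinter> y) = x"
  and a3: "(x \<sqinter> y) \<squnion> y = y" and a4: "(x \<squnion> y) \<sqinter> y = y"
begin

definition "lu x y = y \<sqinter> x \<sqinter> y \<squnion> x \<squnion> y \<sqinter> x \<sqinter> y"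

lemma idem: "y \<sqinter> (y \<sqinter> x \<sqinter> y \<squnion> x \<squnion> y \<sqinter> x \<sqinter> y) \<sqinter> y = y \<sqinter> x \<sqinter> y"
  using [[smt_timeout=600]] by (smt (verit) a1 a2 a3 a4 ja ma)

lemma d1: "x \<sqinter> y \<sqinter> x = x \<Longrightarrow> y \<squnion> x \<squnion> y = y"
  by (smt (verit) a1 a2 a3 a4 ja ma mi ji)
lemma d2: "x \<squnion> y \<squnion> x = x \<Longrightarrow> y \<sqinter> x \<sqinter> y = y"
  by (metis ma a4 a3 a2 a1)

lemma jreg: "z \<squnion> u \<squnion> z \<squnion> w \<squnion> z = z \<squnion> u \<squnion> w \<squnion> z"
proof -
  have f1: "\<forall>a aa ab. a \<squnion> (a \<sqinter> aa \<squnion> ab) = a \<squnion> ab"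
    by (metis (no_types) a2 ja)
  then have "\<forall>a aa ab. (ab \<squnion> aa) \<sqinter> ab \<squnion> (ab \<sqinter> a \<squnion> ab) = ab"
    by (smt (verit) a1 a3 ja ma mi)
  then have f2: "\<forall>a aa ab. ab \<squnion> (aa \<squnion> (ab \<sqinter> a \<squnion> ab)) = ab \<squnion> (aa \<squnion> ab)"
    using f1 by (metis ja)
  have "\<forall>a aa. aa \<sqinter> (a \<squnion> aa) \<squnion> aa = aa \<sqinter> (a \<squnion> aa)"
    by (smt (verit) a2 a4 ja ji ma mi)
  then have "z \<squnion> (u \<squnion> (z \<squnion> (w \<squnion> z))) = z \<squnion> (u \<squnion> (w \<squnion> z))"
    using f2 by (smt (verit) a3 ja)
  then show ?thesis
    using ja by auto
qed

lemma mreg: "z \<sqinter> u \<sqinter> z \<sqinter> w \<sqinter> z = z \<sqinter> u \<sqinter> w \<sqinter> z"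
proof -
  have f1: "\<forall>a aa ab. a \<sqinter> ((a \<squnion> aa) \<sqinter> ab) = a \<sqinter> ab"
    by (metis (no_types) a1 ma)
  then have "\<forall>a aa ab. ((ab \<sqinter> aa) \<squnion> ab) \<sqinter> ((ab \<squnion> a) \<sqinter> ab) = ab"
    by (smt (verit) a2 a4 ja ma ji)
  then have f2: "\<forall>a aa ab. ab \<sqinter> (aa \<sqinter> ((ab \<squnion> a) \<sqinter> ab)) = ab \<sqinter> (aa \<sqinter> ab)"
    using f1 by (metis ma)
  have "\<forall>a aa. (aa \<squnion> (a \<sqinter> aa)) \<sqinter> aa = aa \<squnion> (a \<sqinter> aa)"
    by (smt (verit) a1 a3 ja ji ma mi)
  then have "z \<sqinter> (u \<sqinter> (z \<sqinter> (w \<sqinter> z))) = z \<sqinter> (u \<sqinter> (w \<sqinter> z))"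
    using f2 by (smt (verit) a4 ma)
  then show ?thesis
    using ma by auto
qed

lemma ji2: "x \<squnion> (x \<squnion> t) = x \<squnion> t" by (metis ja ji)
lemma mi2: "x \<sqinter> (x \<sqinter> t) = x \<sqinter> t" by (metis ma mi)
lemma mi3: "x \<sqinter> (y \<sqinter> (x \<sqinter> (y \<sqinter> t))) = x \<sqinter> (y \<sqinter> t)"
proof -
  have "x \<sqinter> (y \<sqinter> (x \<sqinter> (y \<sqinter> t))) = ((x \<sqinter> y) \<sqinter> (x \<sqinter> y)) \<sqinter> t" by (simp add: ma)
  thus ?thesis by (simp add: mi ma)
qed
lemma mi3': "x \<sqinter> (y \<sqinter> (x \<sqinter> y)) = x \<sqinter> y"
proof -
  have "x \<sqinter> (y \<sqinter> (x \<sqinter> y)) = ((x \<sqinter> y) \<sqinter> (x \<sqinter> y))" by (simp add: ma)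
  thus ?thesis by (simp add: mi ma)
qed

lemma lu_idem: "lu (lu x y) y = lu x y"
  unfolding lu_def idem by (simp add: ja ji ji2)

lemma band3: "y \<sqinter> x \<sqinter> y \<sqinter> x \<sqinter> y = y \<sqinter> x \<sqinter> y"
  by (simp add: ma mi mi2 mi3 mi3')

lemma vD: "lu y z \<sqinter> y \<sqinter> lu y z = lu y z \<and> y \<sqinter> lu y z \<sqinter> y = y"
proof -
  define b where "b = z \<sqinter> y \<sqinter> z"
  have "b \<sqinter> y \<sqinter> b = b" unfolding b_def by (simp add: ma mi mi2 mi3 mi3')
  hence yb: "y \<squnion> b \<squnion> y = y" by (rule d1)
  have v: "lu y z = b \<squnion> y \<squnion> b" unfolding lu_def b_def ..
  have "y \<squnion> lu y z \<squnion> y = y" unfolding v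
    by (metis yb ja)
  hence 1: "lu y z \<sqinter> y \<sqinter> lu y z = lu y z" by (rule d2)
  have "lu y z \<squnion> y \<squnion> lu y z = lu y z" unfolding v
    by (metis yb ja)
  hence "y \<sqinter> lu y z \<sqinter> y = y" by (rule d2)
  with 1 show ?thesis by simp
qed

lemma conj: assumes "v \<sqinter> y \<sqinter> v = v" shows "v \<sqinter> t \<sqinter> v = v \<sqinter> y \<sqinter> t \<sqinter> y \<sqinter> v"
proof -
  have "v \<sqinter> t \<sqinter> v = (v \<sqinter> y \<sqinter> v) \<sqinter> t \<sqinter> (v \<sqinter> y \<sqinter> v)" using assms by simp
  also have "\<dots> = (v \<sqinter> y \<sqinter> v \<sqinter> t \<sqinter> v) \<sqinter> y \<sqinter> v" by (simp add: ma)
  also have "\<dots> = v \<sqinter> (y \<sqinter> t) \<sqinter> v \<sqinter> y \<sqinter> v" using mreg[of v y t] by (simp add: ma)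
  also have "\<dots> = v \<sqinter> (y \<sqinter> t) \<sqinter> y \<sqinter> v" by (rule mreg)
  finally show ?thesis by (simp add: ma)
qed

lemma ybe: "lu (lu x y) (lu y z) = lu x (lu y z)"
proof -
  define v where "v = lu y z"
  define a where "a = y \<sqinter> x \<sqinter> y"
  define w where "w = lu x y"
  have vy: "v \<sqinter> y \<sqinter> v = v" and yv: "y \<sqinter> v \<sqinter> y = y" using vD unfolding v_def by auto
  have w: "w = a \<squnion> x \<squnion> a" unfolding w_def lu_def a_def ..
  have ywy: "y \<sqinter> w \<sqinter> y = a" unfolding w_def lu_def a_def by (rule idem)
  define a' where "a' = v \<sqinter> a \<sqinter> v"
  have vxv: "v \<sqinter> x \<sqinter> v = a'" unfolding a'_def a_def using conj[OF vy, of x] by (simp add: ma)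
  have vwv: "v \<sqinter> w \<sqinter> v = a'" unfolding a'_def using conj[OF vy, of w] ywy by (metis ma)
  have ava: "a \<sqinter> v \<sqinter> a = a"
  proof -
    have "a \<sqinter> v \<sqinter> a = y \<sqinter> x \<sqinter> (y \<sqinter> v \<sqinter> y) \<sqinter> x \<sqinter> y" unfolding a_def by (simp add: ma)
    also have "\<dots> = a" unfolding yv a_def by (rule band3)
    finally show ?thesis .
  qed
  have "a \<sqinter> a' \<sqinter> a = a" unfolding a'_def using ava band3[of a v] by (simp add: ma)
  hence aa: "a' \<squnion> a \<squnion> a' = a'" by (rule d1)
  have "lu w v = a' \<squnion> w \<squnion> a'" unfolding lu_def vwv ..
  also have "\<dots> = a' \<squnion> a \<squnion> x \<squnion> a \<squnion> a'" unfolding w by (simp add: ja)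
  also have "\<dots> = a' \<squnion> x \<squnion> a'"
  proof -
    have "a' \<squnion> x \<squnion> a' = (a' \<squnion> a \<squnion> a') \<squnion> x \<squnion> (a' \<squnion> a \<squnion> a')" using aa by simp
    also have "\<dots> = (a' \<squnion> a \<squnion> a' \<squnion> x \<squnion> a') \<squnion> a \<squnion> a'" by (simp add: ja)
    also have "\<dots> = a' \<squnion> (a \<squnion> x) \<squnion> a' \<squnion> a \<squnion> a'" using jreg[of a' a x] by (simp add: ja)
    also have "\<dots> = a' \<squnion> (a \<squnion> x) \<squnion> a \<squnion> a'" by (rule jreg)
    finally show ?thesis by (simp add: ja)
  qed
  also have "\<dots> = lu x v" unfolding lu_def vxv ..
  finally show ?thesis unfolding w_def v_def .
qed

end

lemma sk_of: "skew_lattice mt jn \<Longrightarrow> sk mt jn"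
  unfolding skew_lattice_def sk_def by blast

theorem mainTheorem3:
  fixes mt jn :: "'a \<Rightarrow> 'a \<Rightarrow> 'a"
  assumes "skew_lattice mt jn"
  shows "idempotent_solution (\<lambda>(x, y). (lower_update mt jn x y, y))"
proof -
  interpret sk mt jn using sk_of[OF assms] .
  have lu_eq: "lower_update mt jn = lu" by (intro ext) (simp add: lower_update_def lu_def)
  show ?thesis
    unfolding idempotent_solution_def is_YBE_solution_def lu_eq
    by (auto simp: Let_def ybe lu_idem)
qed

end
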